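(* For every program $\Pi$ with nested expressions, a set $X$ of atoms is a stable model of $\Pi$ (as a theory, in the sense defined below) if and only if $X$ is a stable model of $\Pi$ in the sense of Lifschitz, Tang and Turner (1999), i.e. iff $X$ is a minimal (with respect to set inclusion) set of atoms satisfying $\Pi^{\underline X}$.
   Context: Fix a set of propositional atoms. Formulas are built from atoms and $\bot$ using the binary connectives $\wedge,\vee,\to$; $\top$ abbreviates $\bot\to\bot$, $\neg F$ abbreviates $F\to\bot$. A theory is a set of formulas; $X\models F$ denotes classical satisfaction by the set of atoms $X$. The reduct $F^X$: $\bot^X=\bot$; for an atom $a$, $a^X=a$ if $a\in X$ and $\bot$ otherwise; for $\otimes\in\{\wedge,\vee,\to\}$, $(F\otimes G)^X=F^X\otimes G^X$ if $X\models F\otimes G$, and $\bot$ otherwise; $\Gamma^X=\{F^X:F\in\Gamma\}$. $X$ is a stable model of a theory $\Gamma$ if $X\models\Gamma^X$ and no proper subset of $X$ satisfies $\Gamma^X$. A nested expression is a formula containing no implications other than those of the form $\neg F$ or $\top$. A program with nested expressions is a set of rules $F\leftarrow G$ (identified with $G\to F$) where $F,G$ are nested expressions. The reduct $\Pi^{\underline X}$ is obtained from $\Pi$ by replacing, in each rule, each maximal subformula of the form $\neg F$ by $\top$ if $X\models\neg F$ and by $\bot$ otherwise. *)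

theory Defs
  imports Main
begin

datatype 'a form = Bot | Atom 'a | And "'a form" "'a form" | Or "'a form" "'a form"
  | Imp "'a form" "'a form"

definition Top :: "'a form" where "Top = Imp Bot Bot"
definition Neg :: "'a form \<Rightarrow> 'a form" where "Neg F = Imp F Bot"

fun sat :: "'a set \<Rightarrow> 'a form \<Rightarrow> bool" where
  "sat X Bot = False"
| "sat X (Atom a) = (a \<in> X)"
| "sat X (And F G) = (sat X F \<and> sat X G)"
| "sat X (Or F G) = (sat X F \<or> sat X G)"
| "sat X (Imp F G) = (sat X F \<longrightarrow> sat X G)"

definition sat_theory :: "'a set \<Rightarrow> 'a form set \<Rightarrow> bool" where
  "sat_theory X \<Gamma> = (\<forall>F\<in>\<Gamma>. sat X F)"

fun reduct :: "'a set \<Rightarrow> 'a form \<Rightarrow> 'a form" where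
  "reduct X Bot = Bot"
| "reduct X (Atom a) = (if a \<in> X then Atom a else Bot)"
| "reduct X (And F G) = (if sat X (And F G) then And (reduct X F) (reduct X G) else Bot)"
| "reduct X (Or F G) = (if sat X (Or F G) then Or (reduct X F) (reduct X G) else Bot)"
| "reduct X (Imp F G) = (if sat X (Imp F G) then Imp (reduct X F) (reduct X G) else Bot)"

definition reduct_theory :: "'a set \<Rightarrow> 'a form set \<Rightarrow> 'a form set" where
  "reduct_theory X \<Gamma> = reduct X ` \<Gamma>"

definition stable_model :: "'a set \<Rightarrow> 'a form set \<Rightarrow> bool" where
  "stable_model X \<Gamma> = (sat_theory X (reduct_theory X \<Gamma>) \<and>
     (\<forall>Y. Y \<subset> X \<longrightarrow> \<not> sat_theory Y (reduct_theory X \<Gamma>)))"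

text \<open>Nested expressions: the only implications are of the form Neg F (which includes
  Top = Neg Bot), with F itself a nested expression.\<close>
fun nested :: "'a form \<Rightarrow> bool" where
  "nested Bot = True"
| "nested (Atom a) = True"
| "nested (And F G) = (nested F \<and> nested G)"
| "nested (Or F G) = (nested F \<and> nested G)"
| "nested (Imp F G) = (G = Bot \<and> nested F)"

text \<open>A rule F <- G is represented by the pair (F, G) (head, body); it is identified
  with the formula G \<rightarrow> F.\<close>
type_synonym 'a rule = "'a form \<times> 'a form"

definition rule_formula :: "'a rule \<Rightarrow> 'a form" where
  "rule_formula r = Imp (snd r) (fst r)"

definition nested_program :: "'a rule set \<Rightarrow> bool" where
  "nested_program \<Pi> = (\<forall>(F, G)\<in>\<Pi>. nested F \<and> nested G)"

definition program_theory :: "'a rule set \<Rightarrow> 'a form set" where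
  "program_theory \<Pi> = rule_formula ` \<Pi>"

fun ltt :: "'a set \<Rightarrow> 'a form \<Rightarrow> 'a form" where
  "ltt X Bot = Bot"
| "ltt X (Atom a) = Atom a"
| "ltt X (And F G) = And (ltt X F) (ltt X G)"
| "ltt X (Or F G) = Or (ltt X F) (ltt X G)"
| "ltt X (Imp F G) = (if G = Bot then (if sat X (Neg F) then Top else Bot)
                      else Imp (ltt X F) (ltt X G))"

definition ltt_reduct :: "'a set \<Rightarrow> 'a rule set \<Rightarrow> 'a rule set" where
  "ltt_reduct X \<Pi> = (\<lambda>(F, G). (ltt X F, ltt X G)) ` \<Pi>"

definition ltt_stable_model :: "'a set \<Rightarrow> 'a rule set \<Rightarrow> bool" where
  "ltt_stable_model X \<Pi> =
     (sat_theory X (program_theory (ltt_reduct X \<Pi>)) \<and>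
      (\<forall>Y. Y \<subset> X \<longrightarrow> \<not> sat_theory Y (program_theory (ltt_reduct X \<Pi>))))"

end

theory Submission
  imports Defs
begin

lemma ltt_X: "nested F \<Longrightarrow> sat X (ltt X F) = sat X F"
  by (induction F) (auto simp: Top_def Neg_def)

lemma ltt_mono: "nested F \<Longrightarrow> Y \<subseteq> X \<Longrightarrow> sat Y (ltt X F) \<Longrightarrow> sat X (ltt X F)"
  by (induction F) (auto simp: Top_def Neg_def split: if_splits)

lemma ltt_mono2: "nested F \<Longrightarrow> Y \<subseteq> X \<Longrightarrow> sat Y (ltt X F) \<Longrightarrow> sat X F"
  using ltt_mono ltt_X by blast

lemma key: "nested F \<Longrightarrow> Y \<subseteq> X \<Longrightarrow> sat Y (reduct X F) = (sat X F \<and> sat Y (ltt X F))"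
proof (induction F)
  case (Or F G) then show ?case using ltt_mono2[of F Y X] ltt_mono2[of G Y X] by auto
next
  case (Imp F G) then show ?case by (auto simp: Top_def Neg_def)
qed auto

lemma red_X: "sat X (reduct X F) = sat X F"
  by (induction F) auto

lemma rule_eq:
  assumes "nested F" "nested G" "Y \<subseteq> X" "sat X (Imp G F)"
  shows "sat Y (reduct X (Imp G F)) = sat Y (Imp (ltt X G) (ltt X F))"
  using assms key[of F Y X] key[of G Y X] ltt_mono2[of G Y X] by auto

lemma rule_eqX:
  assumes "nested F" "nested G"
  shows "sat X (Imp (ltt X G) (ltt X F)) = sat X (Imp G F)"
  using assms ltt_X by auto

theorem proposition2:
  fixes \<Pi> :: "'a rule set" and X :: "'a set"
  assumes "nested_program \<Pi>"
  shows "stable_model X (program_theory \<Pi>) \<longleftrightarrow> ltt_stable_model X \<Pi>"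
proof -
  have nst: "\<And>F G. (F, G) \<in> \<Pi> \<Longrightarrow> nested F \<and> nested G"
    using assms unfolding nested_program_def by blast
  have A: "sat_theory X (reduct_theory X (program_theory \<Pi>)) = (\<forall>(F,G)\<in>\<Pi>. sat X (Imp G F))"
    by (auto simp: sat_theory_def reduct_theory_def program_theory_def rule_formula_def red_X
        simp del: sat.simps)
  have B: "sat_theory X (program_theory (ltt_reduct X \<Pi>)) = (\<forall>(F,G)\<in>\<Pi>. sat X (Imp G F))"
  proof -
    have "\<And>F G. (F,G) \<in> \<Pi> \<Longrightarrow> sat X (Imp (ltt X G) (ltt X F)) = sat X (Imp G F)"
      using rule_eqX nst by blast
    then show ?thesis
      unfolding sat_theory_def program_theory_def ltt_reduct_def rule_formula_def
      by (auto simp del: sat.simps)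
  qed
  have C: "sat_theory Y (reduct_theory X (program_theory \<Pi>)) =
           sat_theory Y (program_theory (ltt_reduct X \<Pi>))"
    if "Y \<subseteq> X" "\<forall>(F,G)\<in>\<Pi>. sat X (Imp G F)" for Y
  proof -
    have "\<And>F G. (F,G) \<in> \<Pi> \<Longrightarrow> sat Y (reduct X (Imp G F)) = sat Y (Imp (ltt X G) (ltt X F))"
    proof -
      fix F G assume "(F,G) \<in> \<Pi>"
      then have "nested F" "nested G" "sat X (Imp G F)" using nst that(2) by auto
      then show "sat Y (reduct X (Imp G F)) = sat Y (Imp (ltt X G) (ltt X F))"
        using rule_eq[of F G Y X] that(1) by blast
    qed
    then show ?thesis
      unfolding sat_theory_def program_theory_def ltt_reduct_def rule_formula_def reduct_theory_def
      by (auto simp del: sat.simps reduct.simps)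
  qed
  show ?thesis
  proof (cases "\<forall>(F,G)\<in>\<Pi>. sat X (Imp G F)")
    case True
    then have "\<forall>Y. Y \<subset> X \<longrightarrow> (sat_theory Y (reduct_theory X (program_theory \<Pi>)) =
           sat_theory Y (program_theory (ltt_reduct X \<Pi>)))"
      using C by blast
    then show ?thesis unfolding stable_model_def ltt_stable_model_def using A B by simp
  next
    case False
    then show ?thesis unfolding stable_model_def ltt_stable_model_def using A B by (simp only:) blast
  qed
qed

end
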